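(* For $i=1,2$ let $g_i\in SU(2)$ be a lift of a rotation of $S^2\cong\mathbb{C}P^1$ by an arbitrarily small angle $\epsilon_i$ (about different axes for $i=1,2$), and let \[\Upsilon_i=\{[a,g_i(a),b]\in\mathrm{Sym}^3\mathbb{C}P^1:\ a,b\in\mathbb{C}P^1\}\subset\mathrm{Sym}^3\mathbb{C}P^1\cong\mathbb{C}P^3.\] Then $\deg\Upsilon_i=4$.
   Context: $\mathrm{Sym}^3\mathbb{C}P^1$ is identified with $\mathbb{C}P^3=\mathbb{P}(S^3\mathbb{C}^2)$ by sending an unordered triple of points of $\mathbb{C}P^1$ to the (projectivized) product of the corresponding linear forms, i.e. the homogeneous cubic in two variables with those roots. $SU(2)$ acts on $\mathbb{C}P^1\cong S^2$ by rotations. The degree of a complex surface in $\mathbb{C}P^3$ is the number of its intersection points with a generic line. *)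

theory Defs
  imports "HOL-Analysis.Analysis"
begin

definition proj_pt :: "'a::field ^ 'n \<Rightarrow> ('a ^ 'n) set" where
  "proj_pt v = {c *s v | c. c \<noteq> 0}"

text \<open>Linear form on \<open>\<complex>\<^sup>2\<close> vanishing at the point [a1:a2] of CP^1:
  (x,y) \<mapsto> a2 x - a1 y; stored as coefficient pair (coeff of x, coeff of y).\<close>

text \<open>Coefficients (of x^3, x^2 y, x y^2, y^3) of the binary cubic
  l_a l_b l_c, the product of the linear forms with roots a, b, c.\<close>
definition cubic_of :: "complex^2 \<Rightarrow> complex^2 \<Rightarrow> complex^2 \<Rightarrow> complex^4" where
  "cubic_of a b c =
    (let p1 = a$2; q1 = - a$1; p2 = b$2; q2 = - b$1; p3 = c$2; q3 = - c$1 in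
     vector [p1*p2*p3,
             p1*p2*q3 + p1*q2*p3 + q1*p2*p3,
             p1*q2*q3 + q1*p2*q3 + q1*q2*p3,
             q1*q2*q3])"

text \<open>The identification Sym^3 CP^1 = CP^3: the unordered triple [a,b,c] goes to the
  projective class of the cubic with roots a, b, c.\<close>
definition sym3_pt :: "complex^2 \<Rightarrow> complex^2 \<Rightarrow> complex^2 \<Rightarrow> (complex^4) set" where
  "sym3_pt a b c = proj_pt (cubic_of a b c)"

definition Upsilon :: "complex^2^2 \<Rightarrow> (complex^4) set set" where
  "Upsilon g = {sym3_pt a (g *v a) b | a b. a \<noteq> 0 \<and> b \<noteq> 0}"

definition proj_line :: "complex^4 \<Rightarrow> complex^4 \<Rightarrow> (complex^4) set set" where
  "proj_line u v = {proj_pt (s *s u + t *s v) | s t. (s, t) \<noteq> (0, 0)}"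

text \<open>A subset S of CP^3 has degree d if a generic line meets it in exactly d points:
  there is an open dense set of pairs (u,v) spanning lines, all of which meet S
  in exactly d points.\<close>
definition has_degree :: "(complex^4) set set \<Rightarrow> nat \<Rightarrow> bool" where
  "has_degree S d \<longleftrightarrow>
     (\<exists>U :: ((complex^4) \<times> (complex^4)) set. open U \<and> closure U = UNIV \<and>
        (\<forall>(u, v) \<in> U. (\<forall>s t. s *s u + t *s v = 0 \<longrightarrow> s = 0 \<and> t = 0) \<and>
                      card (proj_line u v \<inter> S) = d))"

definition pauli_dot :: "real^3 \<Rightarrow> complex^2^2" where
  "pauli_dot n = vector [vector [complex_of_real (n$3), complex_of_real (n$1) - \<i> * complex_of_real (n$2)],
                         vector [complex_of_real (n$1) + \<i> * complex_of_real (n$2), - complex_of_real (n$3)]]"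

definition lift_of_rotation :: "complex^2^2 \<Rightarrow> real^3 \<Rightarrow> real \<Rightarrow> bool" where
  "lift_of_rotation g n eps \<longleftrightarrow> norm n = 1 \<and>
     (\<exists>\<sigma>\<in>{1, -1::complex}.
        g = (\<chi> i j. \<sigma> * (complex_of_real (cos (eps/2)) * (mat 1 :: complex^2^2) $ i $ j
                          - \<i> * complex_of_real (sin (eps/2)) * pauli_dot n $ i $ j)))"

end

theory Submission
  imports Defs "HOL-Computational_Algebra.Fundamental_Theorem_Algebra"
begin

lemma vector_4 [simp]:
 "(vector [x,y,z,w] ::('a::zero)^4)$1 = x"
 "(vector [x,y,z,w] ::('a::zero)^4)$2 = y"
 "(vector [x,y,z,w] ::('a::zero)^4)$3 = z"
 "(vector [x,y,z,w] ::('a::zero)^4)$4 = w"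
  unfolding vector_def by simp_all

lemma mv2: fixes g :: "complex^2^2"
  shows "(g *v a)$1 = g$1$1 * a$1 + g$1$2 * a$2" "(g *v a)$2 = g$2$1 * a$1 + g$2$2 * a$2"
  by (simp_all add: matrix_vector_mult_def sum_2)

lemma cubic_of_comp:
  "cubic_of a b c $ 1 = a$2 * b$2 * c$2"
  "cubic_of a b c $ 2 = a$2 * b$2 * (- c$1) + a$2 * (- b$1) * c$2 + (- a$1) * b$2 * c$2"
  "cubic_of a b c $ 3 = a$2 * (- b$1) * (- c$1) + (- a$1) * b$2 * (- c$1) + (- a$1) * (- b$1) * c$2"
  "cubic_of a b c $ 4 = (- a$1) * (- b$1) * (- c$1)"
  by (simp_all add: cubic_of_def Let_def)

definition Fq :: "'a::comm_ring_1 \<Rightarrow> 'a \<Rightarrow> 'a \<Rightarrow> 'a \<Rightarrow> 'a \<Rightarrow> 'a \<Rightarrow> 'a \<Rightarrow> 'a \<Rightarrow> 'a" where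
 "Fq A B C D c0 c1 c2 c3 = (C^6) * (c3 * (c3 * (c3 * c3))) +
    (- (2 * C^5 * D) + 2 * A * C^5) * (c2 * (c3 * (c3 * c3))) +
    (C^4 * D^2 - 4 * A * C^4 * D + A^2 * C^4) * (c2 * (c2 * (c3 * c3))) +
    (2 * A * C^3 * D^2 - 2 * A^2 * C^3 * D) * (c2 * (c2 * (c2 * c3))) +
    (A^2 * C^2 * D^2) * (c2 * (c2 * (c2 * c2))) +
    (2 * C^4 * D^2 - 2 * B * C^5 + 2 * A * C^4 * D + 2 * A^2 * C^4) * (c1 * (c3 * (c3 * c3))) +
    (- (2 * C^3 * D^3) + 3 * B * C^4 * D + A * C^3 * D^2 - 3 * A * B * C^4 - A^2 * C^3 * D + 2 * A^3 * C^3) * (c1 * (c2 * (c3 * c3))) +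
    (- (B * C^3 * D^2) - 3 * A * C^2 * D^3 + 4 * A * B * C^3 * D - A^2 * B * C^3 - 3 * A^3 * C^2 * D) * (c1 * (c2 * (c2 * c3))) +
    (- (A * B * C^2 * D^2) - A^2 * C * D^3 + A^2 * B * C^2 * D + A^3 * C * D^2) * (c1 * (c2 * (c2 * c2))) +
    (C^2 * D^4 - 2 * B * C^3 * D^2 + B^2 * C^4 + 2 * A * C^2 * D^3 + 3 * A^2 * C^2 * D^2 - 2 * A^2 * B * C^3 + 2 * A^3 * C^2 * D + A^4 * C^2) * (c1 * (c1 * (c3 * c3))) +
    (B * C^2 * D^3 - B^2 * C^3 * D + A * C * D^4 - 3 * A * B * C^2 * D^2 + A * B^2 * C^3 + 3 * A^2 * B * C^2 * D - A^3 * B * C^2 - A^4 * C * D) * (c1 * (c1 * (c2 * c3))) +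
    (A * B * C * D^3 - A * B^2 * C^2 * D - 2 * A^2 * B * C * D^2 - A^3 * D^3 + A^3 * B * C * D) * (c1 * (c1 * (c2 * c2))) +
    (B^2 * C^2 * D^2 + A^2 * D^4 - 2 * A^2 * B * C * D^2 + A^2 * B^2 * C^2 + 2 * A^3 * D^3 + A^4 * D^2) * (c1 * (c1 * (c1 * c3))) +
    (A * B^2 * C * D^2 + A^2 * B * D^3 - A^2 * B^2 * C * D - A^3 * B * D^2) * (c1 * (c1 * (c1 * c2))) +
    (A^2 * B^2 * D^2) * (c1 * (c1 * (c1 * c1))) +
    (- (2 * C^3 * D^3) + 3 * B * C^4 * D - 3 * A * C^3 * D^2 - 3 * A * B * C^4 + 3 * A^2 * C^3 * D + 2 * A^3 * C^3) * (c0 * (c3 * (c3 * c3))) +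
    (2 * C^2 * D^4 - 5 * B * C^3 * D^2 + 2 * B^2 * C^4 + A * C^2 * D^3 + 4 * A * B * C^3 * D - 6 * A^2 * C^2 * D^2 - 5 * A^2 * B * C^3 + A^3 * C^2 * D + 2 * A^4 * C^2) * (c0 * (c2 * (c3 * c3))) +
    (2 * B * C^2 * D^3 - 2 * B^2 * C^3 * D + 2 * A * C * D^4 - 3 * A * B * C^2 * D^2 + 2 * A * B^2 * C^3 + 3 * A^2 * C * D^3 + 3 * A^2 * B * C^2 * D - 3 * A^3 * C * D^2 - 2 * A^3 * B * C^2 - 2 * A^4 * C * D) * (c0 * (c2 * (c2 * c3))) +
    (B^2 * C^2 * D^2 + A^2 * D^4 - 2 * A^2 * B * C * D^2 + A^2 * B^2 * C^2 + 2 * A^3 * D^3 + A^4 * D^2) * (c0 * (c2 * (c2 * c2))) +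
    (- (2 * C * D^5) + 5 * B * C^2 * D^3 - 5 * B^2 * C^3 * D - 5 * A * C * D^4 + 3 * A * B * C^2 * D^2 + 5 * A * B^2 * C^3 - 2 * A^2 * C * D^3 - 3 * A^2 * B * C^2 * D + 2 * A^3 * C * D^2 - 5 * A^3 * B * C^2 + 5 * A^4 * C * D + 2 * A^5 * C) * (c0 * (c1 * (c3 * c3))) +
    (- (3 * B * C * D^4) + 3 * B^2 * C^2 * D^2 - 2 * B^3 * C^3 - A * D^5 + 6 * A * B * C * D^3 - 12 * A * B^2 * C^2 * D - 5 * A^2 * D^4 + 12 * A^2 * B * C * D^2 + 3 * A^2 * B^2 * C^2 - 6 * A^3 * D^3 + 6 * A^3 * B * C * D - 5 * A^4 * D^2 - 3 * A^4 * B * C - A^5 * D) * (c0 * (c1 * (c2 * c3))) +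
    (- (B^2 * C * D^3) + B^3 * C^2 * D - A * B * D^4 + 3 * A * B^2 * C * D^2 - A * B^3 * C^2 - 3 * A^2 * B^2 * C * D + A^3 * B^2 * C + A^4 * B * D) * (c0 * (c1 * (c2 * c2))) +
    (- (2 * B^2 * C * D^3) + 2 * B^3 * C^2 * D - 2 * A * B * D^4 + 3 * A * B^2 * C * D^2 - 2 * A * B^3 * C^2 - 3 * A^2 * B * D^3 - 3 * A^2 * B^2 * C * D + 3 * A^3 * B * D^2 + 2 * A^3 * B^2 * C + 2 * A^4 * B * D) * (c0 * (c1 * (c1 * c3))) +
    (- (B^3 * C * D^2) - 3 * A * B^2 * D^3 + 4 * A * B^3 * C * D - A^2 * B^3 * C - 3 * A^3 * B^2 * D) * (c0 * (c1 * (c1 * c2))) +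
    (- (2 * A * B^3 * D^2) + 2 * A^2 * B^3 * D) * (c0 * (c1 * (c1 * c1))) +
    (D^6 - 3 * B * C * D^4 + 9 * B^2 * C^2 * D^2 - 2 * B^3 * C^3 + 3 * A * D^5 - 15 * A * B * C * D^3 + 9 * A * B^2 * C^2 * D + 6 * A^2 * D^4 - 18 * A^2 * B * C * D^2 + 9 * A^2 * B^2 * C^2 + 7 * A^3 * D^3 - 15 * A^3 * B * C * D + 6 * A^4 * D^2 - 3 * A^4 * B * C + 3 * A^5 * D + A^6) * (c0 * (c0 * (c3 * c3))) +
    (2 * B * D^5 - 5 * B^2 * C * D^3 + 5 * B^3 * C^2 * D + 5 * A * B * D^4 - 3 * A * B^2 * C * D^2 - 5 * A * B^3 * C^2 + 2 * A^2 * B * D^3 + 3 * A^2 * B^2 * C * D - 2 * A^3 * B * D^2 + 5 * A^3 * B^2 * C - 5 * A^4 * B * D - 2 * A^5 * B) * (c0 * (c0 * (c2 * c3))) +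
    (B^2 * D^4 - 2 * B^3 * C * D^2 + B^4 * C^2 + 2 * A * B^2 * D^3 + 3 * A^2 * B^2 * D^2 - 2 * A^2 * B^3 * C + 2 * A^3 * B^2 * D + A^4 * B^2) * (c0 * (c0 * (c2 * c2))) +
    (2 * B^2 * D^4 - 5 * B^3 * C * D^2 + 2 * B^4 * C^2 + A * B^2 * D^3 + 4 * A * B^3 * C * D - 6 * A^2 * B^2 * D^2 - 5 * A^2 * B^3 * C + A^3 * B^2 * D + 2 * A^4 * B^2) * (c0 * (c0 * (c1 * c3))) +
    (2 * B^3 * D^3 - 3 * B^4 * C * D - A * B^3 * D^2 + 3 * A * B^4 * C + A^2 * B^3 * D - 2 * A^3 * B^3) * (c0 * (c0 * (c1 * c2))) +
    (B^4 * D^2 - 4 * A * B^4 * D + A^2 * B^4) * (c0 * (c0 * (c1 * c1))) +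
    (2 * B^3 * D^3 - 3 * B^4 * C * D + 3 * A * B^3 * D^2 + 3 * A * B^4 * C - 3 * A^2 * B^3 * D - 2 * A^3 * B^3) * (c0 * (c0 * (c0 * c3))) +
    (2 * B^4 * D^2 - 2 * B^5 * C + 2 * A * B^4 * D + 2 * A^2 * B^4) * (c0 * (c0 * (c0 * c2))) +
    (2 * B^5 * D - 2 * A * B^5) * (c0 * (c0 * (c0 * c1))) +
    (B^6) * (c0 * (c0 * (c0 * c0)))"

definition dt :: "'a::comm_ring_1 \<Rightarrow> 'a \<Rightarrow> 'a \<Rightarrow> 'a \<Rightarrow> 'a \<Rightarrow> 'a \<Rightarrow> 'a \<Rightarrow> 'a \<Rightarrow> 'a" where
 "dt A B C D x y x' y' = (A*x + B*y)*y' - (C*x+D*y)*x'"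

lemma Fq_prod: fixes A B C D x1 y1 x2 y2 x3 y3 :: "'a::idom"
 shows "Fq A B C D (y1*y2*y3) (y1*y2*(-x3) + y1*(-x2)*y3 + (-x1)*y2*y3) (y1*(-x2)*(-x3) + (-x1)*y2*(-x3) + (-x1)*(-x2)*y3) ((-x1)*(-x2)*(-x3))
   = dt A B C D x1 y1 x2 y2 * dt A B C D x2 y2 x1 y1 * dt A B C D x1 y1 x3 y3 * dt A B C D x3 y3 x1 y1 * dt A B C D x2 y2 x3 y3 * dt A B C D x3 y3 x2 y2"
  unfolding Fq_def dt_def by algebra

lemma Fq_hom: fixes A B C D c0 c1 c2 c3 k :: "'a::idom"
 shows "Fq A B C D (k*c0) (k*c1) (k*c2) (k*c3) = k^4 * Fq A B C D c0 c1 c2 c3"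
  unfolding Fq_def by algebra

lemma Fq_zero: "Fq A B C D 0 0 0 0 = 0"
  unfolding Fq_def by simp

definition Disc4 :: "'a::comm_ring_1 \<Rightarrow> 'a \<Rightarrow> 'a \<Rightarrow> 'a \<Rightarrow> 'a \<Rightarrow> 'a" where
 "Disc4 e d c b a = 256*a^3*e^3 - 192*a^2*b*d*e^2 - 128*a^2*c^2*e^2 + 144*a^2*c*d^2*e - 27*a^2*d^4
      + 144*a*b^2*c*e^2 - 6*a*b^2*d^2*e - 80*a*b*c^2*d*e + 18*a*b*c*d^3 + 16*a*c^4*e
      - 4*a*c^3*d^2 - 27*b^4*e^2 + 18*b^3*c*d*e - 4*b^3*d^3 - 4*b^2*c^3*e + b^2*c^2*d^2"

lemma Disc4_root: fixes e d c b a r :: "'a::idom"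
  assumes "e + d*r + c*r^2 + b*r^3 + a*r^4 = 0" "d + 2*c*r + 3*b*r^2 + 4*a*r^3 = 0"
  shows "Disc4 e d c b a = 0"
proof -
  have d: "d = - (2*c*r + 3*b*r^2 + 4*a*r^3)" using assms(2) by (simp add: algebra_simps eq_neg_iff_add_eq_0)
  have e: "e = - (d*r + c*r^2 + b*r^3 + a*r^4)" using assms(1) by (simp add: algebra_simps eq_neg_iff_add_eq_0)
  show ?thesis unfolding Disc4_def e unfolding d by algebra
qed

lemma Disc4_wit: fixes K m t :: "'a::idom"
  shows "Disc4 (K*m) 0 (- (K*t)) 0 (K*m) = 16 * K^6 * m^2 * (4*m^2 - t^2)^2"
  unfolding Disc4_def by simp algebra

definition Fg :: "complex^2^2 \<Rightarrow> complex^4 \<Rightarrow> complex" where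
  "Fg g c = Fq (g$1$1) (g$1$2) (g$2$1) (g$2$2) (c$1) (c$2) (c$3) (c$4)"

definition det2 :: "complex^2 \<Rightarrow> complex^2 \<Rightarrow> complex" where
  "det2 x y = x$1 * y$2 - x$2 * y$1"

lemma Fg_cubic: "Fg g (cubic_of a b c) =
  det2 (g *v a) b * det2 (g *v b) a * det2 (g *v a) c * det2 (g *v c) a * det2 (g *v b) c * det2 (g *v c) b"
  unfolding Fg_def cubic_of_comp Fq_prod by (simp add: dt_def det2_def mv2)

lemma Fg_smult: "Fg g (k *s c) = k^4 * Fg g c"
  unfolding Fg_def by (simp add: Fq_hom)

lemma Fg_zero: "Fg g 0 = 0"
  unfolding Fg_def by (simp add: Fq_zero)


definition vec2 :: "complex \<Rightarrow> complex \<Rightarrow> complex^2" where "vec2 x y = vector [x,y]"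
lemma vec2_comp [simp]: "vec2 x y $ 1 = x" "vec2 x y $ 2 = y" by (simp_all add: vec2_def)
lemma vec2_eq0: "vec2 x y = 0 \<longleftrightarrow> x = 0 \<and> y = 0"
  by (auto simp: vec_eq_iff forall_2)

lemma proj_pt_self: "v \<in> proj_pt v"
  unfolding proj_pt_def by (rule CollectI, rule exI[of _ 1]) simp

lemma proj_pt_eqD: "proj_pt v = proj_pt w \<Longrightarrow> \<exists>k. k \<noteq> 0 \<and> v = k *s w"
  using proj_pt_self[of v] unfolding proj_pt_def by auto

lemma proj_pt_scale: fixes v :: "'a::field^'n"
  assumes "k \<noteq> 0" shows "proj_pt (k *s v) = proj_pt v"
proof (unfold proj_pt_def, intro set_eqI iffI)
  fix x assume "x \<in> {c *s (k *s v) |c. c \<noteq> 0}"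
  then obtain c where "c \<noteq> 0" "x = c *s (k *s v)" by blast
  then show "x \<in> {c *s v |c. c \<noteq> 0}" using assms
    by (auto simp: vector_smult_assoc intro!: exI[of _ "c*k"])
next
  fix x assume "x \<in> {c *s v |c. c \<noteq> 0}"
  then obtain c where "c \<noteq> 0" "x = c *s v" by blast
  then show "x \<in> {c *s (k *s v) |c. c \<noteq> 0}" using assms
    by (auto simp: vector_smult_assoc intro!: exI[of _ "c/k"])
qed

lemma cubic_of_swap12: "cubic_of a b c = cubic_of b a c"
  by (simp add: vec_eq_iff forall_4 cubic_of_comp algebra_simps)
lemma cubic_of_swap23: "cubic_of a b c = cubic_of a c b"
  by (simp add: vec_eq_iff forall_4 cubic_of_comp algebra_simps)
lemma cubic_of_smult1: "cubic_of (k *s a) b c = k *s cubic_of a b c"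
  by (simp add: vec_eq_iff forall_4 cubic_of_comp algebra_simps)
lemma cubic_of_smult2: "cubic_of a (k *s b) c = k *s cubic_of a b c"
  by (simp add: vec_eq_iff forall_4 cubic_of_comp algebra_simps)
lemma cubic_of_add3: "cubic_of a b (x + y) = cubic_of a b x + cubic_of a b y"
  by (simp add: vec_eq_iff forall_4 cubic_of_comp algebra_simps)
lemma cubic_of_smult3: "cubic_of a b (k *s c) = k *s cubic_of a b c"
  by (simp add: vec_eq_iff forall_4 cubic_of_comp algebra_simps)

lemma quad_factor:
  fixes Q0 Q1 Q2 :: complex
  assumes "\<not> (Q0 = 0 \<and> Q1 = 0 \<and> Q2 = 0)"
  shows "\<exists>(b::complex^2) (c::complex^2). b \<noteq> 0 \<and> c \<noteq> 0 \<and> b$2*c$2 = Q0 \<and> b$2*(-c$1) + (-b$1)*c$2 = Q1 \<and> (-b$1)*(-c$1) = Q2"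
proof (cases "Q0 = 0")
  case True
  show ?thesis
    apply (rule exI[of _ "vec2 1 0"], rule exI[of _ "vec2 Q2 (-Q1)"])
    using assms True by (auto simp: vec2_eq0)
next
  case False
  have "\<exists>s. poly [:Q2, Q1, Q0:] s = 0"
    by (rule fundamental_theorem_of_algebra_alt) (use False in auto)
  then obtain s where s: "Q2 + s * (Q1 + s * Q0) = 0" by auto
  then have s2: "Q2 = - (s * (Q1 + s * Q0))" by (simp add: add_eq_0_iff2)
  show ?thesis
    apply (rule exI[of _ "vec2 s 1"], rule exI[of _ "vec2 (-(Q1 + s*Q0)) Q0"])
    using False s2 by (auto simp: vec2_eq0 algebra_simps)
qed

lemma cubic_factor:
  fixes c :: "complex^4"
  assumes "c \<noteq> 0"
  shows "\<exists>a1 a2 a3. a1 \<noteq> 0 \<and> a2 \<noteq> 0 \<and> a3 \<noteq> 0 \<and> c = cubic_of a1 a2 a3"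
proof (cases "c$1 = 0")
  case True
  have "\<not> (- c$2 = 0 \<and> - c$3 = 0 \<and> - c$4 = 0)"
    using assms True by (auto simp: vec_eq_iff forall_4)
  from quad_factor[OF this] obtain b d :: "complex^2" where bd: "b \<noteq> 0" "d \<noteq> 0"
    "b$2*d$2 = - c$2" "b$2*(-d$1) + (-b$1)*d$2 = - c$3" "(-b$1)*(-d$1) = - c$4" by blast
  have e2: "c$2 = - (b$2*d$2)" using bd(3) by (metis minus_minus)
  have e3: "c$3 = - (b$2*(-d$1) + (-b$1)*d$2)" using bd(4) by (metis minus_minus)
  have e4: "c$4 = - ((-b$1)*(-d$1))" using bd(5) by (metis minus_minus)
  have "c = cubic_of (vec2 1 0) b d"
    unfolding vec_eq_iff forall_4 cubic_of_comp using True e2 e3 e4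
    by (simp add: algebra_simps)
  then show ?thesis using bd by (intro exI[of _ "vec2 1 0"] exI[of _ b] exI[of _ d]) (simp add: vec2_eq0)
next
  case False
  have "\<exists>r. poly [:c$4, c$3, c$2, c$1:] r = 0"
    by (rule fundamental_theorem_of_algebra_alt) (use False in auto)
  then obtain r where r: "c$4 + r * (c$3 + r * (c$2 + r * c$1)) = 0" by auto
  define Q0 where "Q0 = c$1"
  define Q1 where "Q1 = c$2 + r * c$1"
  define Q2 where "Q2 = c$3 + r * Q1"
  have "\<not> (Q0 = 0 \<and> Q1 = 0 \<and> Q2 = 0)" using False Q0_def by auto
  from quad_factor[OF this] obtain b d :: "complex^2" where bd: "b \<noteq> 0" "d \<noteq> 0"
    "b$2*d$2 = Q0" "b$2*(-d$1) + (-b$1)*d$2 = Q1" "(-b$1)*(-d$1) = Q2" by blast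
  have e1: "c$1 = b$2*d$2" using bd Q0_def by simp
  have e2: "c$2 = b$2*(-d$1) + (-b$1)*d$2 - r * (b$2*d$2)" using bd Q0_def Q1_def by simp
  have e3: "c$3 = (-b$1)*(-d$1) - r * (b$2*(-d$1) + (-b$1)*d$2)" using bd Q1_def Q2_def by simp
  have r2: "c$4 = - (r * (c$3 + r * (c$2 + r * c$1)))" using r by (simp add: add_eq_0_iff2)
  have e4: "c$4 = - r * ((-b$1)*(-d$1))" unfolding r2 bd(5) Q2_def Q1_def by (simp add: algebra_simps)
  have "c = cubic_of (vec2 r 1) b d"
    unfolding vec_eq_iff forall_4 cubic_of_comp e1 e2 e3 e4 by (simp add: algebra_simps)
  then show ?thesis using bd by (intro exI[of _ "vec2 r 1"] exI[of _ b] exI[of _ d]) (simp add: vec2_eq0)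
qed

lemma det2_zeroD:
  assumes "x \<noteq> 0" "det2 x y = 0" shows "\<exists>k. y = k *s x"
proof (cases "x$1 = 0")
  case True
  then have x2: "x$2 \<noteq> 0" using assms(1) by (auto simp: vec_eq_iff forall_2)
  show ?thesis
    apply (rule exI[of _ "y$2 / x$2"])
    using assms(2) True x2 by (auto simp: vec_eq_iff forall_2 det2_def field_simps)
next
  case False
  show ?thesis
    apply (rule exI[of _ "y$1 / x$1"])
    using assms(2) False by (auto simp: vec_eq_iff forall_2 det2_def field_simps)
qed

lemma det2_self: "det2 x x = 0" by (simp add: det2_def mult.commute)

lemma Upsilon_char:
  assumes ginj: "\<And>a. a \<noteq> 0 \<Longrightarrow> g *v a \<noteq> 0" and c0: "c \<noteq> 0"
  shows "proj_pt c \<in> Upsilon g \<longleftrightarrow> Fg g c = 0"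
proof
  assume "proj_pt c \<in> Upsilon g"
  then obtain a b where "proj_pt c = proj_pt (cubic_of a (g *v a) b)"
    unfolding Upsilon_def sym3_pt_def by auto
  then obtain k where "c = k *s cubic_of a (g *v a) b" using proj_pt_eqD by blast
  then show "Fg g c = 0" by (simp add: Fg_smult Fg_cubic det2_self)
next
  assume F0: "Fg g c = 0"
  obtain a1 a2 a3 where a: "a1 \<noteq> 0" "a2 \<noteq> 0" "a3 \<noteq> 0" and c: "c = cubic_of a1 a2 a3"
    using cubic_factor[OF c0] by blast
  have key: "proj_pt (cubic_of x y z) \<in> Upsilon g"
    if xyz: "x \<noteq> 0" "y \<noteq> 0" "z \<noteq> 0" "det2 (g *v x) y = 0" for x y z
  proof -
    obtain k where k: "y = k *s (g *v x)" using det2_zeroD[OF ginj[OF xyz(1)] xyz(4)] by blast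
    have "k \<noteq> 0" using xyz(2) k by auto
    have "proj_pt (cubic_of x y z) = proj_pt (cubic_of x (g *v x) z)"
      unfolding k cubic_of_smult2 using \<open>k \<noteq> 0\<close> by (rule proj_pt_scale)
    also have "\<dots> \<in> Upsilon g" unfolding Upsilon_def sym3_pt_def using xyz(1,3) by blast
    finally show ?thesis .
  qed
  from F0 have "det2 (g *v a1) a2 = 0 \<or> det2 (g *v a2) a1 = 0 \<or> det2 (g *v a1) a3 = 0 \<or>
      det2 (g *v a3) a1 = 0 \<or> det2 (g *v a2) a3 = 0 \<or> det2 (g *v a3) a2 = 0"
    unfolding c Fg_cubic by auto
  then show "proj_pt c \<in> Upsilon g"
  proof (elim disjE)
    assume "det2 (g *v a1) a2 = 0" then show ?thesis unfolding c using key a by blast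
  next
    assume "det2 (g *v a2) a1 = 0" then show ?thesis unfolding c
      using key[of a2 a1 a3] a cubic_of_swap12[of a1 a2 a3] by auto
  next
    assume "det2 (g *v a1) a3 = 0" then show ?thesis unfolding c
      using key[of a1 a3 a2] a cubic_of_swap23[of a1 a2 a3] by auto
  next
    assume "det2 (g *v a3) a1 = 0" then show ?thesis unfolding c
      using key[of a3 a1 a2] a cubic_of_swap23[of a1 a2 a3] cubic_of_swap12[of a1 a3 a2] by auto
  next
    assume "det2 (g *v a2) a3 = 0" then show ?thesis unfolding c
      using key[of a2 a3 a1] a cubic_of_swap12[of a1 a2 a3] cubic_of_swap23[of a2 a1 a3] by auto
  next
    assume "det2 (g *v a3) a2 = 0" then show ?thesis unfolding c
      using key[of a3 a2 a1] a cubic_of_swap12[of a1 a2 a3] cubic_of_swap23[of a2 a1 a3] cubic_of_swap12[of a2 a3 a1] by auto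
  qed
qed


definition qp :: "complex^2^2 \<Rightarrow> complex^4 \<Rightarrow> complex^4 \<Rightarrow> complex poly" where
 "qp g u v = Fq [:g$1$1:] [:g$1$2:] [:g$2$1:] [:g$2$2:] [:v$1, u$1:] [:v$2, u$2:] [:v$3, u$3:] [:v$4, u$4:]"

lemma poly_Fq: "poly (Fq a b c d e f h i) z = Fq (poly a z) (poly b z) (poly c z) (poly d z) (poly e z) (poly f z) (poly h z) (poly i z)"
  by (simp add: Fq_def)

lemma poly_qp: "poly (qp g u v) z = Fg g (z *s u + v)"
  by (simp add: qp_def poly_Fq Fg_def add.commute)

lemma deg_mon:
  fixes K X1 X2 X3 X4 :: "complex poly"
  assumes "degree K = 0" "degree X1 \<le> 1" "degree X2 \<le> 1" "degree X3 \<le> 1" "degree X4 \<le> 1"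
  shows "degree (K * (X1 * (X2 * (X3 * X4)))) \<le> 4"
proof -
  have a: "degree (X3 * X4) \<le> 2" using degree_mult_le[of X3 X4] assms by linarith
  have b: "degree (X2 * (X3 * X4)) \<le> 3" using degree_mult_le[of X2 "X3*X4"] assms a by linarith
  have c: "degree (X1 * (X2 * (X3 * X4))) \<le> 4" using degree_mult_le[of X1 "X2*(X3*X4)"] assms b by linarith
  show ?thesis using degree_mult_le[of K "X1 * (X2 * (X3 * X4))"] assms c by linarith
qed

lemma deg0_add: fixes p q :: "complex poly" shows "degree p = 0 \<Longrightarrow> degree q = 0 \<Longrightarrow> degree (p + q) = 0"
  using degree_add_le[of p 0 q] by simp
lemma deg0_diff: fixes p q :: "complex poly" shows "degree p = 0 \<Longrightarrow> degree q = 0 \<Longrightarrow> degree (p - q) = 0"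
  using degree_diff_le[of p 0 q] by simp
lemma deg0_minus: fixes p :: "complex poly" shows "degree p = 0 \<Longrightarrow> degree (- p) = 0" by simp
lemma deg0_mult: fixes p q :: "complex poly" shows "degree p = 0 \<Longrightarrow> degree q = 0 \<Longrightarrow> degree (p * q) = 0"
  using degree_mult_le[of p q] by simp
lemma deg0_power: fixes p :: "complex poly" shows "degree p = 0 \<Longrightarrow> degree (p ^ n) = 0"
  using degree_power_le[of p n] by simp
lemma deg0_const: "degree [:a:] = 0" by simp
lemma deg0_num: "degree (numeral n :: 'a::comm_semiring_1 poly) = 0" by simp
lemma deg1_lin: "degree [:a, b:] \<le> 1" by simp

lemma deg_qp: "degree (qp g u v) \<le> 4"
  unfolding qp_def Fq_def
  by (intro degree_add_le degree_diff_le deg_mon deg0_add deg0_diff deg0_minus deg0_mult deg0_power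
      deg0_const deg0_num deg1_lin)

lemma card_roots_sqf:
  fixes Q :: "complex poly"
  assumes "rsquarefree Q" "Q \<noteq> 0"
  shows "card {z. poly Q z = 0} = degree Q"
proof -
  have fin: "finite {z. poly Q z = 0}" using poly_roots_finite[OF assms(2)] .
  have "degree Q = degree (smult (lead_coeff Q) (\<Prod>z|poly Q z = 0. [:-z, 1:]))"
    using complex_poly_decompose_rsquarefree[OF assms(1)] by simp
  also have "\<dots> = degree (\<Prod>z|poly Q z = 0. [:-z, 1:])" using assms(2) by simp
  also have "\<dots> = (\<Sum>z|poly Q z = 0. degree [:-z, 1:])"
    by (rule degree_prod_eq_sum_degree) auto
  also have "\<dots> = card {z. poly Q z = 0}" by simp
  finally show ?thesis by simp
qed

lemma count4:
  assumes ginj: "\<And>a. a \<noteq> 0 \<Longrightarrow> g *v a \<noteq> 0"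
  and Fu: "Fg g u \<noteq> 0" and c4: "coeff (qp g u v) 4 \<noteq> 0"
  and D: "Disc4 (coeff (qp g u v) 0) (coeff (qp g u v) 1) (coeff (qp g u v) 2) (coeff (qp g u v) 3) (coeff (qp g u v) 4) \<noteq> 0"
  shows "(\<forall>s t. s *s u + t *s v = 0 \<longrightarrow> s = 0 \<and> t = 0) \<and> card (proj_line u v \<inter> Upsilon g) = 4"
proof -
  define Q where "Q = qp g u v"
  have dQ: "degree Q = 4" using deg_qp[of g u v] le_degree[of Q 4] c4 unfolding Q_def by linarith
  have Q0: "Q \<noteq> 0" using c4 Q_def by auto
  have pQ: "poly Q r = coeff Q 0 + coeff Q 1 * r + coeff Q 2 * r^2 + coeff Q 3 * r^3 + coeff Q 4 * r^4" for r
    by (simp add: poly_altdef dQ eval_nat_numeral)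
  have dpQ: "degree (pderiv Q) = 3" using dQ by (simp add: degree_pderiv)
  have pdQ: "poly (pderiv Q) r = coeff Q 1 + 2 * coeff Q 2 * r + 3 * coeff Q 3 * r^2 + 4 * coeff Q 4 * r^3" for r
    by (simp add: poly_altdef dpQ eval_nat_numeral coeff_pderiv algebra_simps)
  have sqf: "rsquarefree Q"
    unfolding rsquarefree_roots
  proof (intro allI notI)
    fix r assume "poly Q r = 0 \<and> poly (pderiv Q) r = 0"
    then have h1: "coeff Q 0 + coeff Q 1 * r + coeff Q 2 * r^2 + coeff Q 3 * r^3 + coeff Q 4 * r^4 = 0"
      and h2: "coeff Q 1 + 2 * coeff Q 2 * r + 3 * coeff Q 3 * r^2 + 4 * coeff Q 4 * r^3 = 0"
      by (simp_all only: pQ pdQ)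
    have "Disc4 (coeff Q 0) (coeff Q 1) (coeff Q 2) (coeff Q 3) (coeff Q 4) = 0"
      using h1 h2 by (rule Disc4_root)
    then show False using D Q_def by simp
  qed
  define Z where "Z = {z. poly Q z = 0}"
  have cardZ: "card Z = 4" unfolding Z_def using card_roots_sqf[OF sqf Q0] dQ by simp
  have finZ: "finite Z" unfolding Z_def using poly_roots_finite[OF Q0] .
  have polyQ: "poly Q z = Fg g (z *s u + v)" for z unfolding Q_def by (rule poly_qp)
  have indep: "\<forall>s t. s *s u + t *s v = 0 \<longrightarrow> s = 0 \<and> t = 0"
  proof (intro allI impI)
    fix s t assume st: "s *s u + t *s v = 0"
    show "s = 0 \<and> t = 0"
    proof (cases "t = 0")
      case True
      then have "s *s u = 0" using st by simp
      then have "s = 0 \<or> u = 0" by simp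
      then show ?thesis using True Fu Fg_zero by auto
    next
      case False
      have h: "t * v$i = - (s * u$i)" for i
      proof -
        have "s * u$i + t * v$i = 0" using st by (simp add: vec_eq_iff)
        then show ?thesis by (simp add: algebra_simps eq_neg_iff_add_eq_0)
      qed
      have v: "v = (- s / t) *s u"
        unfolding vec_eq_iff using h False by (simp add: field_simps)
      have "poly Q z = (z - s / t)^4 * Fg g u" for z
        unfolding polyQ v
      proof -
        have eq: "z *s u + (- s / t) *s u = (z - s/t) *s u" by (simp add: vec_eq_iff algebra_simps)
        show "Fg g (z *s u + (- s / t) *s u) = (z - s / t) ^ 4 * Fg g u" by (subst eq) (rule Fg_smult)
      qed
      then have "Z = {s/t}" unfolding Z_def using Fu by auto
      then show ?thesis using cardZ by simp
    qed
  qed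
  have img: "proj_line u v \<inter> Upsilon g = (\<lambda>z. proj_pt (z *s u + v)) ` Z"
  proof (intro set_eqI iffI)
    fix x assume x: "x \<in> proj_line u v \<inter> Upsilon g"
    then obtain s t where st: "(s, t) \<noteq> (0, 0)" "x = proj_pt (s *s u + t *s v)"
      unfolding proj_line_def by auto
    have c0: "s *s u + t *s v \<noteq> 0" using indep st(1) by auto
    have F0: "Fg g (s *s u + t *s v) = 0" using x st(2) Upsilon_char[OF ginj c0] by auto
    have t0: "t \<noteq> 0"
    proof
      assume "t = 0"
      then have "s \<noteq> 0" using st(1) by auto
      then show False using F0 \<open>t = 0\<close> Fu by (simp add: Fg_smult)
    qed
    have eq: "s *s u + t *s v = t *s ((s/t) *s u + v)" using t0 by (simp add: vec_eq_iff field_simps)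
    have "x = proj_pt (t *s ((s/t) *s u + v))" by (simp only: st(2) eq)
    then have "x = proj_pt ((s/t) *s u + v)" by (simp only: proj_pt_scale[OF t0])
    moreover have "t^4 * Fg g ((s/t) *s u + v) = 0" using F0 by (simp only: eq Fg_smult)
    then have "Fg g ((s/t) *s u + v) = 0" using t0 by simp
    ultimately show "x \<in> (\<lambda>z. proj_pt (z *s u + v)) ` Z" unfolding Z_def polyQ
      by (intro image_eqI[of _ _ "s/t"]) auto
  next
    fix x assume "x \<in> (\<lambda>z. proj_pt (z *s u + v)) ` Z"
    then obtain z where z: "z \<in> Z" "x = proj_pt (z *s u + v)" by blast
    have c0: "z *s u + v \<noteq> 0" using indep[rule_format, of z 1] by auto
    have "x \<in> Upsilon g" using z Upsilon_char[OF ginj c0] unfolding Z_def polyQ by auto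
    moreover have "x \<in> proj_line u v" unfolding proj_line_def z(2)
      by (rule CollectI, rule exI[of _ z], rule exI[of _ 1]) simp
    ultimately show "x \<in> proj_line u v \<inter> Upsilon g" by blast
  qed
  have inj: "inj_on (\<lambda>z. proj_pt (z *s u + v)) Z"
  proof (rule inj_onI)
    fix z w assume "proj_pt (z *s u + v) = proj_pt (w *s u + v)"
    then obtain k where k: "k \<noteq> 0" "z *s u + v = k *s (w *s u + v)" using proj_pt_eqD by blast
    then have "(z - k * w) *s u + (1 - k) *s v = 0" by (simp add: vec_eq_iff algebra_simps)
    then have "z - k * w = 0" "1 - k = 0" using indep by blast+
    then show "z = w" by simp
  qed
  show ?thesis using indep img card_image[OF inj] cardZ by simp
qed


type_synonym pt = "(complex^4) \<times> (complex^4)"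

definition seg :: "pt \<Rightarrow> pt \<Rightarrow> complex \<Rightarrow> pt" where
  "seg p d w = (fst p + w *s fst d, snd p + w *s snd d)"

definition good :: "(pt \<Rightarrow> complex) \<Rightarrow> bool" where
  "good f \<longleftrightarrow> continuous_on UNIV f \<and> (\<forall>p d. \<exists>R. \<forall>w. f (seg p d w) = poly R w)"

lemma good_const: "good (\<lambda>x. c)"
  unfolding good_def by (auto intro!: exI[of _ "[:c:]"])

lemma good_fst: "good (\<lambda>x. fst x $ i)"
  unfolding good_def
proof (intro conjI allI)
  show "continuous_on UNIV (\<lambda>x::pt. fst x $ i)"
    by (intro continuous_on_component continuous_on_fst continuous_on_id)
  fix p d show "\<exists>R. \<forall>w. fst (seg p d w) $ i = poly R w"
    by (rule exI[of _ "[:fst p $ i, fst d $ i:]"]) (simp add: seg_def)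
qed

lemma good_snd: "good (\<lambda>x. snd x $ i)"
  unfolding good_def
proof (intro conjI allI)
  show "continuous_on UNIV (\<lambda>x::pt. snd x $ i)"
    by (intro continuous_on_component continuous_on_snd continuous_on_id)
  fix p d show "\<exists>R. \<forall>w. snd (seg p d w) $ i = poly R w"
    by (rule exI[of _ "[:snd p $ i, snd d $ i:]"]) (simp add: seg_def)
qed

lemma good_add: "good f \<Longrightarrow> good h \<Longrightarrow> good (\<lambda>x. f x + h x)"
  unfolding good_def
proof (intro conjI allI)
  assume "continuous_on UNIV f \<and> (\<forall>p d. \<exists>R. \<forall>w. f (seg p d w) = poly R w)"
    "continuous_on UNIV h \<and> (\<forall>p d. \<exists>R. \<forall>w. h (seg p d w) = poly R w)"
  then show "continuous_on UNIV (\<lambda>x. f x + h x)" by (intro continuous_on_add) auto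
  fix p d assume "continuous_on UNIV f \<and> (\<forall>p d. \<exists>R. \<forall>w. f (seg p d w) = poly R w)"
    "continuous_on UNIV h \<and> (\<forall>p d. \<exists>R. \<forall>w. h (seg p d w) = poly R w)"
  then obtain R1 R2 where "\<forall>w. f (seg p d w) = poly R1 w" "\<forall>w. h (seg p d w) = poly R2 w" by blast
  then show "\<exists>R. \<forall>w. f (seg p d w) + h (seg p d w) = poly R w" by (intro exI[of _ "R1 + R2"]) simp
qed

lemma good_mult: "good f \<Longrightarrow> good h \<Longrightarrow> good (\<lambda>x. f x * h x)"
  unfolding good_def
proof (intro conjI allI)
  assume "continuous_on UNIV f \<and> (\<forall>p d. \<exists>R. \<forall>w. f (seg p d w) = poly R w)"
    "continuous_on UNIV h \<and> (\<forall>p d. \<exists>R. \<forall>w. h (seg p d w) = poly R w)"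
  then show "continuous_on UNIV (\<lambda>x. f x * h x)" by (intro continuous_on_mult) auto
  fix p d assume "continuous_on UNIV f \<and> (\<forall>p d. \<exists>R. \<forall>w. f (seg p d w) = poly R w)"
    "continuous_on UNIV h \<and> (\<forall>p d. \<exists>R. \<forall>w. h (seg p d w) = poly R w)"
  then obtain R1 R2 where "\<forall>w. f (seg p d w) = poly R1 w" "\<forall>w. h (seg p d w) = poly R2 w" by blast
  then show "\<exists>R. \<forall>w. f (seg p d w) * h (seg p d w) = poly R w" by (intro exI[of _ "R1 * R2"]) simp
qed

lemma good_minus: "good f \<Longrightarrow> good (\<lambda>x. - f x)"
  using good_mult[OF good_const[of "-1"]] by simp

lemma good_diff: "good f \<Longrightarrow> good h \<Longrightarrow> good (\<lambda>x. f x - h x)"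
  using good_add[OF _ good_minus[of h], of f] by simp

lemma good_power: "good f \<Longrightarrow> good (\<lambda>x. f x ^ n)"
  by (induction n) (simp_all add: good_const good_mult)

lemma good_sum: "finite A \<Longrightarrow> (\<And>i. i \<in> A \<Longrightarrow> good (f i)) \<Longrightarrow> good (\<lambda>x. \<Sum>i\<in>A. f i x)"
  by (induction A rule: finite_induct) (simp_all add: good_const good_add)

definition goodp :: "(pt \<Rightarrow> complex poly) \<Rightarrow> bool" where
  "goodp P \<longleftrightarrow> (\<forall>k. good (\<lambda>x. coeff (P x) k))"

lemma goodp_const: "goodp (\<lambda>x. P)"
  unfolding goodp_def by (simp add: good_const)

lemma goodp_lin: "good f \<Longrightarrow> good h \<Longrightarrow> goodp (\<lambda>x. [:f x, h x:])"
  unfolding goodp_def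
proof (intro allI)
  fix k assume "good f" "good h"
  then show "good (\<lambda>x. coeff [:f x, h x:] k)"
    by (cases k; cases "k - 1") (simp_all add: good_const coeff_pCons split: nat.split)
qed

lemma goodp_add: "goodp P \<Longrightarrow> goodp Q \<Longrightarrow> goodp (\<lambda>x. P x + Q x)"
  unfolding goodp_def by (simp add: good_add)
lemma goodp_diff: "goodp P \<Longrightarrow> goodp Q \<Longrightarrow> goodp (\<lambda>x. P x - Q x)"
  unfolding goodp_def by (simp add: good_diff)
lemma goodp_minus: "goodp P \<Longrightarrow> goodp (\<lambda>x. - P x)"
  unfolding goodp_def by (simp add: good_minus)
lemma goodp_mult: "goodp P \<Longrightarrow> goodp Q \<Longrightarrow> goodp (\<lambda>x. P x * Q x)"
  unfolding goodp_def coeff_mult by (intro allI good_sum good_mult) auto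
lemma goodp_power: "goodp P \<Longrightarrow> goodp (\<lambda>x. P x ^ n)"
  by (induction n) (simp_all add: goodp_const goodp_mult)

lemma seg_cont: "continuous_on UNIV (seg p d)"
proof -
  have e: "seg p d = (\<lambda>w. ((\<chi> i. fst p $ i + w * fst d $ i), (\<chi> i. snd p $ i + w * snd d $ i)))"
    by (auto simp: seg_def vec_eq_iff fun_eq_iff)
  show ?thesis unfolding e by (intro continuous_intros)
qed

lemma dense_good:
  assumes "good f" "f p1 \<noteq> 0"
  shows "closure {x. f x \<noteq> 0} = UNIV"
proof -
  have "x0 \<in> closure {x. f x \<noteq> 0}" for x0
  proof -
    define d where "d = (fst p1 - fst x0, snd p1 - snd x0)"
    obtain R where R: "\<And>w. f (seg x0 d w) = poly R w" using assms(1) unfolding good_def by blast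
    have s1: "seg x0 d 1 = p1" by (simp add: seg_def d_def)
    have s0: "seg x0 d 0 = x0" by (simp add: seg_def)
    have R0: "R \<noteq> 0" using R[of 1] s1 assms(2) by auto
    show ?thesis unfolding closure_approachable
    proof (intro allI impI)
      fix e :: real assume "e > 0"
      then obtain \<delta> where \<delta>: "\<delta> > 0" "\<And>w. dist w 0 < \<delta> \<Longrightarrow> dist (seg x0 d w) (seg x0 d 0) < e"
        using seg_cont[of x0 d] unfolding continuous_on_iff by (metis UNIV_I)
      have "\<exists>w \<in> ball 0 \<delta>. poly R w \<noteq> 0"
      proof (rule ccontr)
        assume "\<not> ?thesis"
        then have "ball 0 \<delta> \<subseteq> {w. poly R w = 0}" by auto
        then have "finite (ball (0::complex) \<delta>)" using poly_roots_finite[OF R0] finite_subset by blast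
        then have "ball (0::complex) \<delta> = {}" using finite_imp_not_open by blast
        then show False using \<delta>(1) by simp
      qed
      then obtain w where w: "dist 0 w < \<delta>" "poly R w \<noteq> 0" by auto
      show "\<exists>y\<in>{x. f x \<noteq> 0}. dist y x0 < e"
        using w \<delta>(2)[of w] R[of w] s0 by (intro bexI[of _ "seg x0 d w"]) (auto simp: dist_commute)
    qed
  qed
  then show ?thesis by auto
qed

lemma open_good: "good f \<Longrightarrow> open {x. f x \<noteq> 0}"
  unfolding good_def by (intro open_Collect_neq continuous_on_const) auto

lemma dense_Int:
  fixes S T :: "'a::topological_space set"
  assumes "open S" "closure S = UNIV" "closure T = UNIV"
  shows "closure (S \<inter> T) = UNIV"
proof -
  have "UNIV = closure S" using assms(2) by simp
  also have "\<dots> = closure (S \<inter> closure T)" using assms(3) by simp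
  also have "\<dots> \<subseteq> closure (closure (S \<inter> T))"
    by (rule closure_mono[OF open_Int_closure_subset[OF assms(1)]])
  also have "\<dots> = closure (S \<inter> T)" by simp
  finally show ?thesis by auto
qed


definition Psi :: "complex^2^2 \<Rightarrow> pt \<Rightarrow> complex" where
  "Psi g x = Fg g (fst x) * coeff (qp g (fst x) (snd x)) 4 *
     Disc4 (coeff (qp g (fst x) (snd x)) 0) (coeff (qp g (fst x) (snd x)) 1) (coeff (qp g (fst x) (snd x)) 2)
           (coeff (qp g (fst x) (snd x)) 3) (coeff (qp g (fst x) (snd x)) 4)"

lemma goodp_qp: "goodp (\<lambda>x. qp g (fst x) (snd x))"
  unfolding qp_def Fq_def
  by (intro goodp_add goodp_diff goodp_minus goodp_mult goodp_power goodp_lin good_fst good_snd goodp_const)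

lemma good_coeff_qp: "good (\<lambda>x. coeff (qp g (fst x) (snd x)) k)"
  using goodp_qp unfolding goodp_def by blast

lemma good_Fg: "good (\<lambda>x. Fg g (fst x))"
  unfolding Fg_def Fq_def
  by (intro good_add good_diff good_minus good_mult good_power good_fst good_const)

lemma good_Psi: "good (\<lambda>x. Psi g x)"
  unfolding Psi_def Disc4_def
  by (intro good_add good_diff good_minus good_mult good_power good_Fg good_coeff_qp good_const)


lemma ginj_det:
  fixes g :: "complex^2^2"
  assumes "g$1$1 * g$2$2 - g$1$2 * g$2$1 \<noteq> 0" "a \<noteq> 0"
  shows "g *v a \<noteq> 0"
proof
  assume h: "g *v a = 0"
  have h1: "g$1$1 * a$1 + g$1$2 * a$2 = 0" "g$2$1 * a$1 + g$2$2 * a$2 = 0"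
    using h mv2[of g a] by (simp_all add: vec_eq_iff)
  have "(g$1$1 * g$2$2 - g$1$2 * g$2$1) * a$1 = 0"
    using h1 by algebra
  moreover have "(g$1$1 * g$2$2 - g$1$2 * g$2$1) * a$2 = 0"
    using h1 by algebra
  ultimately have "a$1 = 0" "a$2 = 0" using assms(1) by auto
  then show False using assms(2) by (simp add: vec_eq_iff forall_2)
qed

context
  fixes g :: "complex^2^2" and e f :: "complex^2" and l l' :: complex
  assumes ge: "g *v e = l *s e" and gf: "g *v f = l' *s f"
begin

definition E :: "complex \<Rightarrow> complex \<Rightarrow> complex^2" where "E a b = a *s e + b *s f"

lemma gE: "g *v E a b = (a * l) *s e + (b * l') *s f"
proof -
  have e1: "g$1$1 * e$1 + g$1$2 * e$2 = l * e$1" and e2: "g$2$1 * e$1 + g$2$2 * e$2 = l * e$2"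
    using ge mv2[of g e] by (simp_all add: vec_eq_iff forall_2)
  have f1: "g$1$1 * f$1 + g$1$2 * f$2 = l' * f$1" and f2: "g$2$1 * f$1 + g$2$2 * f$2 = l' * f$2"
    using gf mv2[of g f] by (simp_all add: vec_eq_iff forall_2)
  have "g$1$1 * (a * e$1 + b * f$1) + g$1$2 * (a * e$2 + b * f$2) = a * l * e$1 + b * l' * f$1"
    using e1 f1 by algebra
  moreover have "g$2$1 * (a * e$1 + b * f$1) + g$2$2 * (a * e$2 + b * f$2) = a * l * e$2 + b * l' * f$2"
    using e2 f2 by algebra
  ultimately show ?thesis unfolding E_def by (simp add: vec_eq_iff forall_2 mv2)
qed

lemma detE: "det2 (g *v E a b) (E c d) = (a * l * d - b * l' * c) * det2 e f"
  unfolding gE unfolding E_def det2_def by (simp add: algebra_simps)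

lemma witness:
  assumes De: "det2 e f \<noteq> 0" and l0: "l \<noteq> 0" "l' \<noteq> 0" and l2: "l^2 \<noteq> l'^2" "l^2 \<noteq> - (l'^2)"
  shows "\<exists>p. Psi g p \<noteq> 0"
proof -
  define u1 where "u1 = cubic_of (E 1 1) (E 1 (-1)) (E 1 0)"
  define v1 where "v1 = cubic_of (E 1 1) (E 1 (-1)) (E 0 1)"
  define K where "K = - ((l + l')^2 * (det2 e f)^6)"
  define m where "m = l^2 * l'^2"
  define t where "t = l^4 + l'^4"
  have ll: "l + l' \<noteq> 0"
  proof
    assume "l + l' = 0" then have "l = - l'" by (simp add: add_eq_0_iff2)
    then show False using l2(1) by simp
  qed
  have lin: "z *s u1 + v1 = cubic_of (E 1 1) (E 1 (-1)) (E z 1)" for z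
  proof -
    have "E z 1 = z *s E 1 0 + E 0 1" by (simp add: E_def vec_eq_iff)
    then show ?thesis unfolding u1_def v1_def by (simp add: cubic_of_add3 cubic_of_smult3)
  qed
  have pq: "poly (qp g u1 v1) z = poly [:K*m, 0, - (K*t), 0, K*m:] z" for z
    unfolding poly_qp lin Fg_cubic detE K_def m_def t_def by simp algebra
  then have qeq: "qp g u1 v1 = [:K*m, 0, - (K*t), 0, K*m:]"
    using poly_eq_poly_eq_iff by blast
  have K0: "K \<noteq> 0" unfolding K_def using De ll by simp
  have m0: "m \<noteq> 0" unfolding m_def using l0 by simp
  have "4*m^2 - t^2 = - ((l^2 - l'^2)^2 * (l^2 + l'^2)^2)" unfolding m_def t_def by algebra
  moreover have "l^2 - l'^2 \<noteq> 0" "l^2 + l'^2 \<noteq> 0" using l2 by (auto simp: add_eq_0_iff2)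
  ultimately have mt: "4*m^2 - t^2 \<noteq> 0" by simp
  have c4: "coeff (qp g u1 v1) 4 = K * m" unfolding qeq by (simp add: eval_nat_numeral)
  have Dq: "Disc4 (coeff (qp g u1 v1) 0) (coeff (qp g u1 v1) 1) (coeff (qp g u1 v1) 2)
           (coeff (qp g u1 v1) 3) (coeff (qp g u1 v1) 4) = 16 * K^6 * m^2 * (4*m^2 - t^2)^2"
    unfolding qeq by (simp add: eval_nat_numeral Disc4_wit)
  have Fu: "Fg g u1 \<noteq> 0"
  proof -
    have ll2: "- l \<noteq> l'" using ll by (simp add: neg_eq_iff_add_eq_0)
    show ?thesis unfolding u1_def Fg_cubic detE using De ll ll2 l0 by simp
  qed
  have "Psi g (u1, v1) \<noteq> 0"
    unfolding Psi_def using Fu c4 Dq K0 m0 mt by simp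
  then show ?thesis by blast
qed

end

lemma main_degree:
  fixes g :: "complex^2^2" and e f :: "complex^2" and l l' :: complex
  assumes ge: "g *v e = l *s e" and gf: "g *v f = l' *s f"
    and De: "det2 e f \<noteq> 0" and l0: "l \<noteq> 0" "l' \<noteq> 0" and l2: "l^2 \<noteq> l'^2" "l^2 \<noteq> - (l'^2)"
    and ginj: "\<And>a. a \<noteq> 0 \<Longrightarrow> g *v a \<noteq> 0"
  shows "has_degree (Upsilon g) 4"
proof -
  obtain p1 where p1: "Psi g p1 \<noteq> 0" using witness[OF ge gf De l0 l2] by blast
  define U where "U = {x. Psi g x \<noteq> 0}"
  have "open U" unfolding U_def using open_good[OF good_Psi] .
  moreover have "closure U = UNIV" unfolding U_def using dense_good[OF good_Psi p1] .
  moreover have "(\<forall>s t. s *s u + t *s v = 0 \<longrightarrow> s = 0 \<and> t = 0) \<and> card (proj_line u v \<inter> Upsilon g) = 4"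
    if "(u, v) \<in> U" for u v
  proof -
    have "Psi g (u, v) \<noteq> 0" using that U_def by simp
    then have "Fg g u \<noteq> 0" "coeff (qp g u v) 4 \<noteq> 0"
      "Disc4 (coeff (qp g u v) 0) (coeff (qp g u v) 1) (coeff (qp g u v) 2) (coeff (qp g u v) 3) (coeff (qp g u v) 4) \<noteq> 0"
      unfolding Psi_def by auto
    then show ?thesis using count4[OF ginj] by blast
  qed
  ultimately show ?thesis unfolding has_degree_def by blast
qed


lemma eigen2:
  fixes g :: "complex^2^2"
  assumes tr: "g$1$1 + g$2$2 = l + l'" and dt: "g$1$1 * g$2$2 - g$1$2 * g$2$1 = l * l'" and ne: "l \<noteq> l'"
  shows "\<exists>e. e \<noteq> 0 \<and> g *v e = l *s e"
proof (cases "g$1$1 - l' = 0 \<and> g$2$1 = 0")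
  case False
  have 1: "g$1$1 * (g$1$1 - l') + g$1$2 * g$2$1 = l * (g$1$1 - l')" using tr dt by algebra
  have 2: "g$2$1 * (g$1$1 - l') + g$2$2 * g$2$1 = l * g$2$1" using tr dt by algebra
  show ?thesis
    by (rule exI[of _ "vec2 (g$1$1 - l') (g$2$1)"]) (use False 1 2 in \<open>simp add: vec2_eq0 vec_eq_iff forall_2 mv2\<close>)
next
  case True
  have nz: "\<not> (g$1$2 = 0 \<and> g$2$2 - l' = 0)"
  proof
    assume "g$1$2 = 0 \<and> g$2$2 - l' = 0"
    then have "l' + l' = l + l'" using True tr by simp
    then show False using ne by simp
  qed
  have 1: "g$1$1 * g$1$2 + g$1$2 * (g$2$2 - l') = l * g$1$2" using tr by algebra
  have 2: "g$2$1 * g$1$2 + g$2$2 * (g$2$2 - l') = l * (g$2$2 - l')" using tr dt by algebra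
  show ?thesis
    by (rule exI[of _ "vec2 (g$1$2) (g$2$2 - l')"]) (use nz 1 2 in \<open>simp add: vec2_eq0 vec_eq_iff forall_2 mv2\<close>)
qed

lemma indep_eig:
  fixes g :: "complex^2^2"
  assumes e0: "e \<noteq> 0" and f0: "f \<noteq> 0" and ge: "g *v e = l *s e" and gf: "g *v f = l' *s f" and ne: "l \<noteq> l'"
  shows "det2 e f \<noteq> 0"
proof
  assume "det2 e f = 0"
  then obtain k where k: "f = k *s e" using det2_zeroD[OF e0] by blast
  have gk: "g *v f = k *s (g *v e)" unfolding k by (simp add: vec_eq_iff forall_2 mv2 algebra_simps)
  have eq: "l' *s f = l *s f"
  proof -
    have "l' *s f = g *v f" using gf by simp
    also have "\<dots> = k *s (l *s e)" using gk ge by simp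
    also have "\<dots> = l *s (k *s e)" by (simp add: vector_smult_assoc mult.commute)
    finally show ?thesis using k by (simp only:)
  qed
  then have "(l - l') *s f = 0" by (auto simp: vec_eq_iff algebra_simps)
  then show False using ne f0 by simp
qed

lemma norm3: fixes n :: "real^3" assumes "norm n = 1" shows "(n$1)^2 + (n$2)^2 + (n$3)^2 = 1"
proof -
  have "sqrt ((norm (n$1))^2 + (norm (n$2))^2 + (norm (n$3))^2) = 1"
    using assms unfolding norm_vec_def L2_set_def by (simp add: sum_3)
  then show ?thesis by simp
qed


theorem proposition5p38:
  shows "\<exists>\<delta>>0. \<forall>g n eps. 0 < eps \<and> eps < \<delta> \<and> lift_of_rotation g n eps
            \<longrightarrow> has_degree (Upsilon g) 4"
proof (intro exI[of _ "pi/2"] conjI allI impI)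
  show "(0::real) < pi/2" by simp
  fix g :: "complex^2^2" and n :: "real^3" and eps :: real
  assume H: "0 < eps \<and> eps < pi/2 \<and> lift_of_rotation g n eps"
  then have eps: "0 < eps" "eps < pi/2" and nn: "norm n = 1" by (auto simp: lift_of_rotation_def)
  from H obtain \<sigma> :: complex where sg: "\<sigma> \<in> {1, -1}" and gdef:
    "g = (\<chi> i j. \<sigma> * (complex_of_real (cos (eps/2)) * (mat 1 :: complex^2^2) $ i $ j
                          - \<i> * complex_of_real (sin (eps/2)) * pauli_dot n $ i $ j))"
    unfolding lift_of_rotation_def by blast
  define c where "c = cos (eps/2)"
  define s where "s = sin (eps/2)"
  define C where "C = complex_of_real c"
  define S where "S = complex_of_real s"
  define N1 where "N1 = complex_of_real (n$1)"
  define N2 where "N2 = complex_of_real (n$2)"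
  define N3 where "N3 = complex_of_real (n$3)"
  have c0: "c > 0" unfolding c_def using eps by (intro cos_gt_zero) auto
  have s0: "s > 0" unfolding s_def using eps by (intro sin_gt_zero) auto
  have ce: "cos eps > 0" using eps by (intro cos_gt_zero) auto
  have cs1: "c^2 + s^2 = 1" unfolding c_def s_def by (simp add: add.commute)
  have cd: "c^2 - s^2 = cos eps" unfolding c_def s_def using cos_double[of "eps/2"] by simp
  have "C^2 + S^2 = complex_of_real (c^2 + s^2)" unfolding C_def S_def by simp
  then have CS1: "C^2 + S^2 = 1" using cs1 by simp
  have CSd: "C^2 - S^2 \<noteq> 0"
  proof -
    have "C^2 - S^2 = complex_of_real (c^2 - s^2)" unfolding C_def S_def by simp
    then have "C^2 - S^2 = complex_of_real (cos eps)" using cd by simp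
    then show ?thesis using ce by simp
  qed
  have C0: "C \<noteq> 0" and S0: "S \<noteq> 0" using c0 s0 by (auto simp: C_def S_def)
  have "N1^2 + N2^2 + N3^2 = complex_of_real ((n$1)^2 + (n$2)^2 + (n$3)^2)"
    unfolding N1_def N2_def N3_def by simp
  then have N: "N1^2 + N2^2 + N3^2 = 1" using norm3[OF nn] by simp
  have sg2: "\<sigma> * \<sigma> = 1" using sg by auto
  have ii: "\<i> * \<i> = -1" by simp
  have A: "g$1$1 = \<sigma> * (C - \<i> * S * N3)" and B: "g$1$2 = \<sigma> * (- (\<i> * S * (N1 - \<i> * N2)))"
    and Cc: "g$2$1 = \<sigma> * (- (\<i> * S * (N1 + \<i> * N2)))" and D: "g$2$2 = \<sigma> * (C - \<i> * S * (- N3))"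
    unfolding gdef C_def S_def N1_def N2_def N3_def c_def s_def
    by (simp_all add: mat_def pauli_dot_def)
  define l where "l = \<sigma> * (C - \<i> * S)"
  define l' where "l' = \<sigma> * (C + \<i> * S)"
  have tr: "g$1$1 + g$2$2 = l + l'" unfolding A D l_def l'_def by algebra
  have ll1: "l * l' = 1" unfolding l_def l'_def using sg2 ii CS1 by algebra
  have dt: "g$1$1 * g$2$2 - g$1$2 * g$2$1 = l * l'" unfolding A B Cc D ll1
    using sg2 ii CS1 N by algebra
  have dif: "l - l' = - 2 * \<i> * \<sigma> * S" unfolding l_def l'_def by algebra
  have ne: "l \<noteq> l'" using dif S0 sg2 by auto
  have sq1: "l^2 - l'^2 = - 4 * \<i> * S * C" unfolding l_def l'_def using sg2 by algebra
  have sq2: "l^2 + l'^2 = 2 * (C^2 - S^2)" unfolding l_def l'_def using sg2 ii by algebra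
  have l2: "l^2 \<noteq> l'^2" using sq1 S0 C0 by auto
  have l3: "l^2 \<noteq> - (l'^2)"
  proof
    assume "l^2 = - (l'^2)"
    then have "l^2 + l'^2 = 0" by simp
    then show False using sq2 CSd by simp
  qed
  have l0: "l \<noteq> 0" "l' \<noteq> 0" using ll1 by auto
  have ginj: "g *v a \<noteq> 0" if "a \<noteq> 0" for a
    by (rule ginj_det) (use that dt ll1 in auto)
  obtain e where e: "e \<noteq> 0" "g *v e = l *s e" using eigen2[OF tr dt ne] by blast
  obtain f where f: "f \<noteq> 0" "g *v f = l' *s f"
    using eigen2[of g l' l] tr dt ne by (auto simp: add.commute mult.commute)
  have De: "det2 e f \<noteq> 0" using indep_eig[OF e(1) f(1) e(2) f(2) ne] .
  show "has_degree (Upsilon g) 4"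
    by (rule main_degree[OF e(2) f(2) De l0 l2 l3 ginj])
qed

end
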